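(* For every integer $k\ge 1$, the choice index (list chromatic index) of the generalised Petersen graph $GP(3k,k)$ equals its chromatic index; that is, the list-colouring conjecture holds for $GP(3k,k)$.
   Context: For integers $n,k$ with $1\le k<n/2$, the generalised Petersen graph $GP(n,k)$ has vertex set $\{u_i,v_i : i\in\mathbb{Z}_n\}$ and edge set $\{u_iu_{i+1},\ u_iv_i,\ v_iv_{i+k} : i\in\mathbb{Z}_n\}$. The chromatic index of a graph is the least number of colours in a proper edge colouring. The choice index is the least $\ell$ such that for every assignment of lists $L_e$ of $\ell$ colours to the edges $e$, there is a proper edge colouring in which every edge $e$ receives a colour from $L_e$. *)

theory Defs
  imports Main
begin

text \<open>Vertices of GP(n,k): (False, i) is u_i and (True, i) is v_i, for i < n.
  Edges are represented as two-element vertex sets; indices are taken mod n.\<close>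

definition gp_vertices :: "nat \<Rightarrow> (bool \<times> nat) set" where
  "gp_vertices n = UNIV \<times> {..<n}"

definition gp_edges :: "nat \<Rightarrow> nat \<Rightarrow> (bool \<times> nat) set set" where
  "gp_edges n k =
     (\<Union>i<n. {{(False, i), (False, (i + 1) mod n)},
               {(False, i), (True, i)},
               {(True, i), (True, (i + k) mod n)}})"

definition proper_edge_colouring :: "'a set set \<Rightarrow> ('a set \<Rightarrow> 'c) \<Rightarrow> bool" where
  "proper_edge_colouring E c \<longleftrightarrow>
     (\<forall>e\<in>E. \<forall>e'\<in>E. e \<noteq> e' \<and> e \<inter> e' \<noteq> {} \<longrightarrow> c e \<noteq> c e')"

definition chromatic_index :: "'a set set \<Rightarrow> nat" where
  "chromatic_index E =
     (LEAST m. \<exists>c :: 'a set \<Rightarrow> nat. proper_edge_colouring E c \<and> (\<forall>e\<in>E. c e < m))"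

definition choice_index :: "'a set set \<Rightarrow> nat" where
  "choice_index E =
     (LEAST l. \<forall>L :: 'a set \<Rightarrow> nat set. (\<forall>e\<in>E. finite (L e) \<and> card (L e) = l) \<longrightarrow>
        (\<exists>c :: 'a set \<Rightarrow> nat. proper_edge_colouring E c \<and> (\<forall>e\<in>E. c e \<in> L e)))"

end

theory Submission
  imports Defs Complex_Main "HOL-Library.FuncSet"
begin


definition dw :: "real set \<Rightarrow> real \<Rightarrow> real" where
  "dw A x = (\<Prod>b\<in>A-{x}. x - b)"

definition ATsum :: "'i set \<Rightarrow> 'j set \<Rightarrow> ('j\<Rightarrow>'i) \<Rightarrow> ('j\<Rightarrow>'i) \<Rightarrow> ('i \<Rightarrow> real set) \<Rightarrow> real" where
  "ATsum I J src tgt L = (\<Sum>c\<in>PiE I L. (\<Prod>j\<in>J. c (src j) - c (tgt j)) / (\<Prod>i\<in>I. dw (L i) (c i)))"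

definition endp :: "('j\<Rightarrow>'i) \<Rightarrow> ('j\<Rightarrow>'i) \<Rightarrow> ('j \<Rightarrow> bool) \<Rightarrow> 'j \<Rightarrow> 'i" where
  "endp src tgt \<sigma> j = (if \<sigma> j then src j else tgt j)"

definition degs :: "'j set \<Rightarrow> ('j\<Rightarrow>'i) \<Rightarrow> ('j\<Rightarrow>'i) \<Rightarrow> ('j \<Rightarrow> bool) \<Rightarrow> 'i \<Rightarrow> nat" where
  "degs J src tgt \<sigma> i = card {j\<in>J. endp src tgt \<sigma> j = i}"

definition sg :: "'j set \<Rightarrow> ('j \<Rightarrow> bool) \<Rightarrow> real" where
  "sg J \<sigma> = (\<Prod>j\<in>J. if \<sigma> j then 1 else -1)"

definition ATcoef :: "'i set \<Rightarrow> 'j set \<Rightarrow> ('j\<Rightarrow>'i) \<Rightarrow> ('j\<Rightarrow>'i) \<Rightarrow> real" where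
  "ATcoef I J src tgt = (\<Sum>\<sigma>\<in>PiE J (\<lambda>_. UNIV). sg J \<sigma> * (if \<forall>i\<in>I. degs J src tgt \<sigma> i = 2 then 1 else 0))"

lemma g3:
  assumes "finite A" "card A = 3" "d \<le> 2"
  shows "(\<Sum>x\<in>A. x ^ d / dw A x) = (if d = 2 then 1 else 0)"
proof -
  obtain x y z where A: "A = {x,y,z}" and d: "x \<noteq> y" "x \<noteq> z" "y \<noteq> z"
    using assms(2) by (auto simp: card_3_iff)
  have dx: "dw A x = (x-y)*(x-z)" unfolding dw_def A using d
    by (simp add: insert_Diff_if)
  have dy: "dw A y = (y-x)*(y-z)" unfolding dw_def A using d
    by (simp add: insert_Diff_if insert_commute)
  have dz: "dw A z = (z-x)*(z-y)" unfolding dw_def A using d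
    by (simp add: insert_Diff_if insert_commute)
  have s: "(\<Sum>x\<in>A. x ^ d / dw A x) = x^d/((x-y)*(x-z)) + y^d/((y-x)*(y-z)) + z^d/((z-x)*(z-y))"
    using d by (simp add: A dx[unfolded A] dy[unfolded A] dz[unfolded A])
  have nz: "x - y \<noteq> 0" "x - z \<noteq> 0" "y - z \<noteq> 0" "y - x \<noteq> 0" "z - x \<noteq> 0" "z - y \<noteq> 0" using d by auto
  have e0: "1/((x-y)*(x-z)) + 1/((y-x)*(y-z)) + 1/((z-x)*(z-y)) = 0"
    using d by (simp add: divide_simps) (simp add: algebra_simps power2_eq_square)
  have e1: "x/((x-y)*(x-z)) + y/((y-x)*(y-z)) + z/((z-x)*(z-y)) = 0"
    using d by (simp add: divide_simps) (simp add: algebra_simps power2_eq_square)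
  have e2: "x^2/((x-y)*(x-z)) + y^2/((y-x)*(y-z)) + z^2/((z-x)*(z-y)) = 1"
    using d by (simp add: divide_simps) (simp add: algebra_simps power2_eq_square)
  consider "d = 0" | "d = 1" | "d = 2" using assms(3) by linarith
  then show ?thesis
  proof cases
    case 1 then show ?thesis unfolding s using e0 by simp
  next
    case 2 then show ?thesis unfolding s using e1 by simp
  next
    case 3 then show ?thesis unfolding s using e2 by simp
  qed
qed

lemma expand_prod:
  assumes "finite J"
  shows "(\<Prod>j\<in>J. (c (src j) - c (tgt j)) :: real)
       = (\<Sum>\<sigma>\<in>PiE J (\<lambda>_. UNIV). \<Prod>j\<in>J. if \<sigma> j then c (src j) else - c (tgt j))"
proof -
  have "(\<Prod>j\<in>J. c (src j) - c (tgt j)) = (\<Prod>j\<in>J. \<Sum>b\<in>(UNIV::bool set). if b then c (src j) else - c (tgt j))"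
    by (simp add: UNIV_bool)
  also have "\<dots> = (\<Sum>\<sigma>\<in>PiE J (\<lambda>_. UNIV). \<Prod>j\<in>J. if \<sigma> j then c (src j) else - c (tgt j))"
    by (rule prod_sum_PiE) (use assms in auto)
  finally show ?thesis .
qed

lemma term_prod:
  assumes "finite J" "finite I" "\<forall>j\<in>J. src j \<in> I \<and> tgt j \<in> I"
  shows "(\<Prod>j\<in>J. if \<sigma> j then c (src j) else - c (tgt j))
       = sg J \<sigma> * (\<Prod>i\<in>I. (c i :: real) ^ degs J src tgt \<sigma> i)"
proof -
  have "(\<Prod>j\<in>J. if \<sigma> j then c (src j) else - c (tgt j))
      = (\<Prod>j\<in>J. (if \<sigma> j then 1 else -1) * c (endp src tgt \<sigma> j))"
    by (intro prod.cong) (auto simp: endp_def)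
  also have "\<dots> = sg J \<sigma> * (\<Prod>j\<in>J. c (endp src tgt \<sigma> j))"
    by (simp add: sg_def prod.distrib)
  also have "(\<Prod>j\<in>J. c (endp src tgt \<sigma> j)) = (\<Prod>i\<in>I. \<Prod>j\<in>{j\<in>J. endp src tgt \<sigma> j = i}. c (endp src tgt \<sigma> j))"
    by (rule prod.group[symmetric]) (use assms in \<open>auto simp: endp_def\<close>)
  also have "\<dots> = (\<Prod>i\<in>I. c i ^ degs J src tgt \<sigma> i)"
  proof (intro prod.cong refl)
    fix i assume "i \<in> I"
    have "(\<Prod>j\<in>{j\<in>J. endp src tgt \<sigma> j = i}. c (endp src tgt \<sigma> j)) = (\<Prod>j\<in>{j\<in>J. endp src tgt \<sigma> j = i}. c i)"
      by (intro prod.cong) auto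
    then show "(\<Prod>j\<in>{j\<in>J. endp src tgt \<sigma> j = i}. c (endp src tgt \<sigma> j)) = c i ^ degs J src tgt \<sigma> i"
      by (simp add: degs_def)
  qed
  finally show ?thesis .
qed

lemma sum_degs:
  assumes "finite J" "finite I" "\<forall>j\<in>J. src j \<in> I \<and> tgt j \<in> I"
  shows "(\<Sum>i\<in>I. degs J src tgt \<sigma> i) = card J"
proof -
  have "(\<Sum>i\<in>I. \<Sum>j\<in>{j\<in>J. endp src tgt \<sigma> j = i}. (1::nat)) = (\<Sum>j\<in>J. 1)"
    by (rule sum.group) (use assms in \<open>auto simp: endp_def\<close>)
  then show ?thesis by (simp add: degs_def)
qed

lemma AT_indep:
  assumes fI: "finite I" and fJ: "finite J" and cJ: "card J = 2 * card I"
    and st: "\<forall>j\<in>J. src j \<in> I \<and> tgt j \<in> I"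
    and L: "\<forall>i\<in>I. finite (L i) \<and> card (L i) = 3"
  shows "ATsum I J src tgt L = ATcoef I J src tgt"
proof -
  have fL: "\<And>i. i \<in> I \<Longrightarrow> finite (L i)" using L by auto
  have "ATsum I J src tgt L = (\<Sum>c\<in>PiE I L. \<Sum>\<sigma>\<in>PiE J (\<lambda>_. UNIV).
          sg J \<sigma> * (\<Prod>i\<in>I. c i ^ degs J src tgt \<sigma> i / dw (L i) (c i)))"
    unfolding ATsum_def
  proof (intro sum.cong refl)
    fix c assume "c \<in> PiE I L"
    have "(\<Prod>j\<in>J. c (src j) - c (tgt j)) / (\<Prod>i\<in>I. dw (L i) (c i))
       = (\<Sum>\<sigma>\<in>PiE J (\<lambda>_. UNIV). sg J \<sigma> * (\<Prod>i\<in>I. c i ^ degs J src tgt \<sigma> i)) / (\<Prod>i\<in>I. dw (L i) (c i))"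
      using expand_prod[OF fJ, of c src tgt] term_prod[OF fJ fI st] by simp
    also have "\<dots> = (\<Sum>\<sigma>\<in>PiE J (\<lambda>_. UNIV). sg J \<sigma> * ((\<Prod>i\<in>I. c i ^ degs J src tgt \<sigma> i) / (\<Prod>i\<in>I. dw (L i) (c i))))"
      by (simp add: sum_divide_distrib)
    also have "\<dots> = (\<Sum>\<sigma>\<in>PiE J (\<lambda>_. UNIV). sg J \<sigma> * (\<Prod>i\<in>I. c i ^ degs J src tgt \<sigma> i / dw (L i) (c i)))"
      by (simp add: prod_dividef)
    finally show "(\<Prod>j\<in>J. c (src j) - c (tgt j)) / (\<Prod>i\<in>I. dw (L i) (c i)) = \<dots>" .
  qed
  also have "\<dots> = (\<Sum>\<sigma>\<in>PiE J (\<lambda>_. UNIV). sg J \<sigma> * (\<Sum>c\<in>PiE I L. \<Prod>i\<in>I. c i ^ degs J src tgt \<sigma> i / dw (L i) (c i)))"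
    by (subst sum.swap) (simp add: sum_distrib_left)
  also have "\<dots> = (\<Sum>\<sigma>\<in>PiE J (\<lambda>_. UNIV). sg J \<sigma> * (\<Prod>i\<in>I. \<Sum>x\<in>L i. x ^ degs J src tgt \<sigma> i / dw (L i) x))"
    by (intro sum.cong refl arg_cong[where f="\<lambda>x. _ * x"], rule prod_sum_PiE[symmetric]) (use fI fL in auto)
  also have "\<dots> = ATcoef I J src tgt"
    unfolding ATcoef_def
  proof (intro sum.cong refl arg_cong[where f="\<lambda>x. _ * x"])
    fix \<sigma>
    let ?d = "degs J src tgt \<sigma>"
    have sd: "(\<Sum>i\<in>I. ?d i) = 2 * card I" using sum_degs[OF fJ fI st] cJ by simp
    show "(\<Prod>i\<in>I. \<Sum>x\<in>L i. x ^ ?d i / dw (L i) x) = (if \<forall>i\<in>I. ?d i = 2 then 1 else 0)"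
    proof (cases "\<forall>i\<in>I. ?d i = 2")
      case True
      then show ?thesis using g3 L by (simp add: prod.neutral)
    next
      case False
      have "\<exists>i\<in>I. ?d i < 2"
      proof (rule ccontr)
        assume "\<not> (\<exists>i\<in>I. ?d i < 2)"
        then have ge: "\<forall>i\<in>I. 2 \<le> ?d i" by auto
        from False obtain i0 where i0: "i0 \<in> I" "?d i0 \<noteq> 2" by auto
        with ge have gt: "2 < ?d i0" by force
        have "(\<Sum>i\<in>I. (2::nat)) < (\<Sum>i\<in>I. ?d i)"
          by (rule sum_strict_mono_ex1) (use fI ge i0 gt in auto)
        with sd show False by simp
      qed
      then obtain i where i: "i \<in> I" "?d i < 2" by auto
      have "(\<Sum>x\<in>L i. x ^ ?d i / dw (L i) x) = 0" using g3[of "L i" "?d i"] L i by auto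
      then have "(\<Prod>i\<in>I. \<Sum>x\<in>L i. x ^ ?d i / dw (L i) x) = 0"
        using i fI by (metis (no_types, lifting) prod_zero_iff)
      then show ?thesis using False by simp
    qed
  qed
  finally show ?thesis .
qed


definition GI :: "nat \<Rightarrow> (nat \<times> nat) set" where "GI k = {..<k} \<times> {..<9}"
definition GJ :: "nat \<Rightarrow> (nat \<times> nat) set" where "GJ k = {..<k} \<times> {..<18}"

definition prevo :: "nat \<Rightarrow> nat \<Rightarrow> nat \<Rightarrow> nat \<times> nat" where
  "prevo k j m = (if j = 0 then (k - 1, (m + 2) mod 3) else (j - 1, m))"

definition arcs :: "nat \<Rightarrow> nat \<times> nat \<Rightarrow> (nat \<times> nat) \<times> (nat \<times> nat)" where
  "arcs k jr = (let j = fst jr; r = snd jr; m = r div 6; a = r mod 6;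
      po = prevo k j m; pt = (j, 6 + (m + 2) mod 3) in
      if a = 0 then (po, (j,m)) else if a = 1 then (po, (j,3+m)) else if a = 2 then ((j,m),(j,3+m))
      else if a = 3 then (pt, (j,6+m)) else if a = 4 then (pt, (j,3+m)) else ((j,6+m),(j,3+m)))"

definition srcA :: "nat \<Rightarrow> nat \<times> nat \<Rightarrow> nat \<times> nat" where "srcA k jr = fst (arcs k jr)"
definition tgtA :: "nat \<Rightarrow> nat \<times> nat \<Rightarrow> nat \<times> nat" where "tgtA k jr = snd (arcs k jr)"

definition gp_edge :: "nat \<Rightarrow> nat \<times> nat \<Rightarrow> (bool \<times> nat) set" where
  "gp_edge k jq = (let j = fst jq; q = snd jq; n = 3 * k; p = (q mod 3) * k + j in
     if q < 3 then {(False, p), (False, (p + 1) mod n)}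
     else if q < 6 then {(False, p), (True, p)}
     else {(True, p), (True, (p + k) mod n)})"

lemma divmod_pos: "(j::nat) < k \<Longrightarrow> (m * k + j) mod k = j \<and> (m * k + j) div k = m"
  by (simp add: add.commute)

lemma pos_lt: "(j::nat) < k \<Longrightarrow> m < 3 \<Longrightarrow> m * k + j < 3 * k"
proof -
  assume a: "j < k" "m < 3"
  then have "m * k + j < m * k + k" by simp
  also have "\<dots> = (m + 1) * k" by simp
  also have "\<dots> \<le> 3 * k" using a(2) by (intro mult_right_mono) auto
  finally show ?thesis .
qed

lemma card_GI: "card (GI k) = 9 * k" by (simp add: GI_def card_cartesian_product)
lemma card_GJ: "card (GJ k) = 18 * k" by (simp add: GJ_def card_cartesian_product)

lemma arcs_in:
  assumes "k \<ge> 1" "jr \<in> GJ k" shows "srcA k jr \<in> GI k \<and> tgtA k jr \<in> GI k"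
proof -
  obtain j r where jr: "jr = (j,r)" "j < k" "r < 18" using assms(2) by (auto simp: GJ_def)
  have m: "r div 6 < 3" using jr(3) by auto
  have "prevo k j (r div 6) \<in> GI k" using assms(1) jr(2) m by (auto simp: prevo_def GI_def)
  then show ?thesis using jr m by (auto simp: srcA_def tgtA_def arcs_def Let_def GI_def)
qed

lemma edges_eq:
  assumes "k \<ge> 1" shows "gp_edge k ` GI k = gp_edges (3 * k) k"
proof
  show "gp_edge k ` GI k \<subseteq> gp_edges (3 * k) k"
  proof
    fix e assume "e \<in> gp_edge k ` GI k"
    then obtain j q where jq: "j < k" "q < 9" "e = gp_edge k (j,q)" by (auto simp: GI_def)
    define p where "p = (q mod 3) * k + j"
    have p: "p < 3 * k" unfolding p_def by (rule pos_lt) (use jq in auto)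
    have "e \<in> {{(False, p), (False, (p + 1) mod (3*k))}, {(False, p), (True, p)}, {(True, p), (True, (p + k) mod (3*k))}}"
    proof -
      have "gp_edge k (j,q) = (if q < 3 then {(False, p), (False, (p + 1) mod (3*k))}
        else if q < 6 then {(False, p), (True, p)} else {(True, p), (True, (p + k) mod (3*k))})"
        by (simp only: gp_edge_def Let_def p_def fst_conv snd_conv)
      then show ?thesis using jq by auto
    qed
    then show "e \<in> gp_edges (3 * k) k"
      unfolding gp_edges_def using p by blast
  qed
next
  show "gp_edges (3 * k) k \<subseteq> gp_edge k ` GI k"
  proof
    fix e assume "e \<in> gp_edges (3 * k) k"
    then obtain i where i: "i < 3 * k" and e: "e = {(False, i), (False, (i + 1) mod (3 * k))} \<or>
        e = {(False, i), (True, i)} \<or> e = {(True, i), (True, (i + k) mod (3 * k))}"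
      unfolding gp_edges_def by auto
    define j where "j = i mod k"
    define m where "m = i div k"
    have kp: "k > 0" using assms by auto
    have jk: "j < k" unfolding j_def using kp by auto
    have m3: "m < 3" unfolding m_def using i kp by (simp add: less_mult_imp_div_less mult.commute)
    have im: "i = m * k + j" unfolding m_def j_def by simp
    have m36: "(3 + m) mod 3 = m" "(6 + m) mod 3 = m" "m mod 3 = m" using m3 by presburger+
    have e0: "gp_edge k (j, m) = {(False, i), (False, (i + 1) mod (3 * k))}"
      using m3 by (simp add: gp_edge_def Let_def im m36)
    have e1: "gp_edge k (j, 3 + m) = {(False, i), (True, i)}"
      using m3 by (simp add: gp_edge_def Let_def im m36)
    have e2: "gp_edge k (j, 6 + m) = {(True, i), (True, (i + k) mod (3 * k))}"
      using m3 by (simp add: gp_edge_def Let_def im m36)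
    have "(j,m) \<in> GI k" "(j,3+m) \<in> GI k" "(j,6+m) \<in> GI k" using jk m3 by (auto simp: GI_def)
    then show "e \<in> gp_edge k ` GI k"
      using e e0 e1 e2 by (metis image_eqI)
  qed
qed

definition inc3 :: "nat \<Rightarrow> bool \<times> nat \<Rightarrow> (nat \<times> nat) set" where
  "inc3 k x = (let p = snd x; j = p mod k; m = p div k in
     if fst x then {(j, 6 + m), (j, 6 + (m + 2) mod 3), (j, 3 + m)}
     else {(j, m), prevo k j m, (j, 3 + m)})"

lemma incid:
  assumes k: "k \<ge> 1" and jq: "(j,q) \<in> GI k" and x: "x \<in> gp_edge k (j,q)"
  shows "snd x < 3 * k \<and> (j,q) \<in> inc3 k x"
proof -
  have j: "j < k" and q: "q < 9" using jq by (auto simp: GI_def)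
  define m where "m = q mod 3"
  have m3: "m < 3" unfolding m_def by auto
  define p where "p = m * k + j"
  have p: "p < 3 * k" unfolding p_def using j m3 by (rule pos_lt)
  have pdm: "p mod k = j" "p div k = m" unfolding p_def using divmod_pos[OF j] by auto
  have ge: "gp_edge k (j,q) = (if q < 3 then {(False, p), (False, (p + 1) mod (3*k))}
        else if q < 6 then {(False, p), (True, p)} else {(True, p), (True, (p + k) mod (3*k))})"
    by (simp only: gp_edge_def Let_def p_def m_def fst_conv snd_conv)
  consider "q < 3" | "3 \<le> q" "q < 6" | "6 \<le> q" by linarith
  then show ?thesis
  proof cases
    case 1
    then have qm: "q = m" unfolding m_def by simp
    from x 1 ge have "x = (False, p) \<or> x = (False, (p + 1) mod (3*k))" by auto
    then show ?thesis
    proof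
      assume "x = (False, p)" then show ?thesis using p pdm qm by (simp add: inc3_def Let_def)
    next
      assume xe: "x = (False, (p + 1) mod (3*k))"
      consider "j + 1 < k" | "j + 1 = k" "m < 2" | "j + 1 = k" "m = 2" using j m3 by linarith
      then show ?thesis
      proof cases
        case 1
        have pp: "p + 1 = m * k + (j + 1)" unfolding p_def by simp
        have lt: "p + 1 < 3 * k" unfolding pp using 1 m3 by (rule pos_lt)
        have "(p + 1) mod k = j + 1" "(p + 1) div k = m" unfolding pp using divmod_pos[OF 1] by auto
        then show ?thesis using xe lt qm by (simp add: inc3_def Let_def prevo_def)
      next
        case 2
        have pp: "p + 1 = (m + 1) * k + 0" unfolding p_def using 2 by simp
        have lt: "p + 1 < 3 * k" unfolding pp using 2 k by (intro pos_lt) auto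
        have "(p + 1) mod k = 0" "(p + 1) div k = m + 1" unfolding pp using divmod_pos[of 0 k] k by auto
        moreover have "(m + 1 + 2) mod 3 = m" using 2 by auto
        ultimately show ?thesis using xe lt qm 2 by (simp add: inc3_def Let_def prevo_def)
      next
        case 3
        have pp: "p + 1 = 3 * k" unfolding p_def using 3 by simp
        then show ?thesis using xe qm 3 k by (simp add: inc3_def Let_def prevo_def)
      qed
    qed
  next
    case 2
    then have qm: "q = 3 + m" unfolding m_def by presburger
    from x 2 ge have "x = (False, p) \<or> x = (True, p)" by auto
    then show ?thesis using p pdm qm by (auto simp: inc3_def Let_def)
  next
    case 3
    then have qm: "q = 6 + m" unfolding m_def using q by presburger
    from x 3 q ge have "x = (True, p) \<or> x = (True, (p + k) mod (3*k))" by auto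
    then show ?thesis
    proof
      assume "x = (True, p)" then show ?thesis using p pdm qm by (simp add: inc3_def Let_def)
    next
      assume xe: "x = (True, (p + k) mod (3*k))"
      consider "m < 2" | "m = 2" using m3 by linarith
      then show ?thesis
      proof cases
        case 1
        have pp: "p + k = (m + 1) * k + j" unfolding p_def by simp
        have lt: "p + k < 3 * k" unfolding pp using 1 j by (intro pos_lt) auto
        have dm: "(p + k) mod k = j \<and> (p + k) div k = m + 1" unfolding pp by (rule divmod_pos[OF j])
        then have "(p + k) mod k = j" "(p + k) div k = m + 1" by auto
        moreover have "(m + 1 + 2) mod 3 = m" using 1 by auto
        ultimately show ?thesis using xe lt qm by (simp add: inc3_def Let_def)
      next
        case 2
        have pp: "(p + k) mod (3 * k) = j" unfolding p_def using 2 j by simp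
        have "j mod k = j" "j div k = 0" using j by auto
        then show ?thesis using xe pp qm 2 j by (simp add: inc3_def Let_def)
      qed
    qed
  qed
qed

lemma arcs_at:
  assumes "j < k" "m < 3" "a < 6"
  shows "(j, 6 * m + a) \<in> GJ k \<and> arcs k (j, 6 * m + a) =
     (let po = prevo k j m; pt = (j, 6 + (m + 2) mod 3) in
      if a = 0 then (po, (j,m)) else if a = 1 then (po, (j,3+m)) else if a = 2 then ((j,m),(j,3+m))
      else if a = 3 then (pt, (j,6+m)) else if a = 4 then (pt, (j,3+m)) else ((j,6+m),(j,3+m)))"
proof -
  have dm: "(6 * m + a) div 6 = m" "(6 * m + a) mod 6 = a" using assms by auto
  have "6 * m + a < 18" using assms by auto
  then have "(j, 6 * m + a) \<in> GJ k" using assms by (simp add: GJ_def)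
  moreover have "arcs k (j, 6 * m + a) =
     (let po = prevo k j m; pt = (j, 6 + (m + 2) mod 3) in
      if a = 0 then (po, (j,m)) else if a = 1 then (po, (j,3+m)) else if a = 2 then ((j,m),(j,3+m))
      else if a = 3 then (pt, (j,6+m)) else if a = 4 then (pt, (j,3+m)) else ((j,6+m),(j,3+m)))"
    by (simp only: arcs_def Let_def fst_conv snd_conv dm)
  ultimately show ?thesis by blast
qed

lemma adjacent:
  assumes k: "k \<ge> 1" and i1: "i1 \<in> GI k" and i2: "i2 \<in> GI k" and ne: "i1 \<noteq> i2"
    and x1: "x \<in> gp_edge k i1" and x2: "x \<in> gp_edge k i2"
  shows "\<exists>r\<in>GJ k. (srcA k r = i1 \<and> tgtA k r = i2) \<or> (srcA k r = i2 \<and> tgtA k r = i1)"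
proof -
  obtain j1 q1 where e1: "i1 = (j1,q1)" by force
  obtain j2 q2 where e2: "i2 = (j2,q2)" by force
  have A: "snd x < 3 * k" "i1 \<in> inc3 k x" using incid[OF k, of j1 q1 x] i1 x1 e1 by auto
  have B: "i2 \<in> inc3 k x" using incid[OF k, of j2 q2 x] i2 x2 e2 by auto
  define p where "p = snd x"
  define j where "j = p mod k"
  define m where "m = p div k"
  have kp: "k > 0" using k by auto
  have j: "j < k" unfolding j_def using kp by auto
  have m: "m < 3" unfolding m_def p_def using A(1) kp by (simp add: less_mult_imp_div_less mult.commute)
  have ar: "\<And>a. a < 6 \<Longrightarrow> (j, 6 * m + a) \<in> GJ k" using arcs_at[OF j m] by blast
  have av: "\<And>a. a < 6 \<Longrightarrow> srcA k (j, 6*m+a) = fst (arcs k (j, 6*m+a)) \<and> tgtA k (j, 6*m+a) = snd (arcs k (j, 6*m+a))"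
    by (simp add: srcA_def tgtA_def)
  have a0: "arcs k (j, 6*m+0) = (prevo k j m, (j,m))" using arcs_at[OF j m, of 0] by (simp add: Let_def)
  have a1: "arcs k (j, 6*m+1) = (prevo k j m, (j,3+m))" using arcs_at[OF j m, of 1] by (simp add: Let_def)
  have a2: "arcs k (j, 6*m+2) = ((j,m), (j,3+m))" using arcs_at[OF j m, of 2] by (simp add: Let_def)
  have a3: "arcs k (j, 6*m+3) = ((j, 6 + (m + 2) mod 3), (j,6+m))" using arcs_at[OF j m, of 3] by (simp add: Let_def)
  have a4: "arcs k (j, 6*m+4) = ((j, 6 + (m + 2) mod 3), (j,3+m))" using arcs_at[OF j m, of 4] by (simp add: Let_def)
  have a5: "arcs k (j, 6*m+5) = ((j,6+m), (j,3+m))" using arcs_at[OF j m, of 5] by (simp add: Let_def)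
  have inc: "inc3 k x = (if fst x then {(j, 6 + m), (j, 6 + (m + 2) mod 3), (j, 3 + m)}
     else {(j, m), prevo k j m, (j, 3 + m)})" by (simp add: inc3_def Let_def j_def m_def p_def)
  show ?thesis
  proof (cases "fst x")
    case True
    then have "i1 \<in> {(j, 6 + m), (j, 6 + (m + 2) mod 3), (j, 3 + m)}" "i2 \<in> {(j, 6 + m), (j, 6 + (m + 2) mod 3), (j, 3 + m)}"
      using A B inc by auto
    then show ?thesis using ne ar[of 3] ar[of 4] ar[of 5] av[of 3] av[of 4] av[of 5] a3 a4 a5
      by simp (metis fst_conv snd_conv)
  next
    case False
    then have "i1 \<in> {(j, m), prevo k j m, (j, 3 + m)}" "i2 \<in> {(j, m), prevo k j m, (j, 3 + m)}"
      using A B inc by auto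
    then show ?thesis using ne ar[of 0] ar[of 1] ar[of 2] av[of 0] av[of 1] av[of 2] a0 a1 a2
      by simp (metis fst_conv snd_conv)
  qed
qed



definition V3 :: "(real \<times> real \<times> real) set" where "V3 = {0,1,2} \<times> {0,1,2} \<times> {0,1,2}"

lemma sumV3: "(\<Sum>z\<in>V3. g z) = (\<Sum>z0\<in>{0,1,2}. \<Sum>z1\<in>{0,1,2}. \<Sum>z2\<in>{0::real,1,2}. g (z0,z1,z2))"
  unfolding V3_def sum.cartesian_product by (simp add: case_prod_beta')

definition wv :: "real \<Rightarrow> real" where "wv x = dw {0,1,2} x"

lemma wv_vals: "wv 0 = 2" "wv 1 = -1" "wv 2 = 2"
  by (simp_all add: wv_def dw_def insert_Diff_if)

definition Fd :: "real \<Rightarrow> real \<Rightarrow> real \<Rightarrow> real" where "Fd x y z = (x-y)*(x-z)*(y-z)"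

definition eps :: "real \<Rightarrow> real \<Rightarrow> real \<Rightarrow> real" where
  "eps s0 s1 s2 = (if s0 \<noteq> s1 \<and> s1 \<noteq> s2 \<and> s0 \<noteq> s2 then (if (s1 - s0 = 1 \<or> s1 - s0 = -2) then 1 else -1) else 0)"

definition bt :: "real \<Rightarrow> real \<Rightarrow> real" where
  "bt a b = (if a = 0 then (if b = 1 then 1 else -1) else if a = 1 then (if b = 0 then 1/2 else -1/2) else (if b = 0 then 1 else -1))"

definition Tcc :: "real\<times>real\<times>real \<Rightarrow> real\<times>real\<times>real \<Rightarrow> real" where
  "Tcc a b = (case a of (a0,a1,a2) \<Rightarrow> case b of (b0,b1,b2) \<Rightarrow>
     if a0 \<noteq> b0 \<and> a1 \<noteq> b1 \<and> a2 \<noteq> b2 then 2 * eps (3-a0-b0) (3-a1-b1) (3-a2-b2) * bt a0 b0 * bt a1 b1 * bt a2 b2 else 0)"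

definition T2f :: "real\<times>real\<times>real \<Rightarrow> real\<times>real\<times>real \<Rightarrow> real" where
  "T2f a c = (case a of (a0,a1,a2) \<Rightarrow> case c of (c0,c1,c2) \<Rightarrow> if a0 = a1 \<and> a1 = a2 then 0 else
      (if c0 = a0 \<and> c1 = a1 \<and> c2 = a2 then -2 else 0)
    + (if c0 = a1 \<and> c1 = a2 \<and> c2 = a0 then 1 else 0) + (if c0 = a2 \<and> c1 = a0 \<and> c2 = a1 then 1 else 0))"

definition rot :: "real\<times>real\<times>real \<Rightarrow> real\<times>real\<times>real" where
  "rot a = (snd (snd a), fst a, fst (snd a))"

definition Bm :: "real \<Rightarrow> real \<Rightarrow> real \<Rightarrow> real" where "Bm x a b = Fd a b x / (wv x * wv b)"

definition Hs :: "real\<times>real\<times>real \<Rightarrow> real" where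
  "Hs s = (\<Sum>t\<in>V3. Fd (snd (snd t)) (fst t) (fst s) * Fd (fst t) (fst (snd t)) (fst (snd s))
      * Fd (fst (snd t)) (snd (snd t)) (snd (snd s)) / (wv (fst t) * wv (fst (snd t)) * wv (snd (snd t))))"

lemma Hs_val: "\<forall>s\<in>V3. Hs s = 2 * eps (fst s) (fst (snd s)) (snd (snd s))"
  unfolding Hs_def sumV3 by (simp add: V3_def Fd_def wv_vals eps_def)

lemma Tcc_sum: "\<forall>a\<in>V3. \<forall>b\<in>V3. (\<Sum>s\<in>V3. Bm (fst s) (fst a) (fst b) * Bm (fst (snd s)) (fst (snd a)) (fst (snd b))
   * Bm (snd (snd s)) (snd (snd a)) (snd (snd b)) * (2 * eps (fst s) (fst (snd s)) (snd (snd s)))) = Tcc a b"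
  unfolding sumV3 by (simp add: V3_def Bm_def Fd_def wv_vals eps_def Tcc_def bt_def)

lemma T2: "\<forall>x\<in>V3. \<forall>y\<in>V3. (\<Sum>z\<in>V3. Tcc x z * Tcc z y) = T2f x y"
  unfolding sumV3 by (simp add: V3_def Tcc_def T2f_def eps_def bt_def)

lemma T3: "\<forall>x\<in>V3. \<forall>y\<in>V3. (\<Sum>z\<in>V3. T2f x z * Tcc z y) = -3 * Tcc x y"
  unfolding sumV3 by (simp add: V3_def Tcc_def T2f_def eps_def bt_def)

lemma f1: "(\<Sum>y\<in>V3. Tcc (rot y) y) = -6"
  unfolding sumV3 by (simp add: rot_def Tcc_def eps_def bt_def)

lemma f2: "(\<Sum>y\<in>V3. T2f (rot y) y) = 24"
  unfolding sumV3 by (simp add: rot_def T2f_def)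

fun mpow :: "('s \<Rightarrow> 's \<Rightarrow> real) \<Rightarrow> 's set \<Rightarrow> nat \<Rightarrow> 's \<Rightarrow> 's \<Rightarrow> real" where
  "mpow M X 0 x y = (if x = y then 1 else 0)"
| "mpow M X (Suc n) x y = (\<Sum>z\<in>X. mpow M X n x z * M z y)"

lemma PiE_Suc_sum:
  fixes g :: "(nat \<Rightarrow> 's) \<Rightarrow> real"
  assumes "finite X"
  shows "(\<Sum>Ob\<in>PiE {..<Suc n} (\<lambda>_. X). g Ob) = (\<Sum>Ob'\<in>PiE {..<n} (\<lambda>_. X). \<Sum>z\<in>X. g (Ob'(n := z)))"
proof -
  have "(\<Sum>Ob\<in>PiE {..<Suc n} (\<lambda>_. X). g Ob) = (\<Sum>(Ob',z)\<in>PiE {..<n} (\<lambda>_. X) \<times> X. g (Ob'(n := z)))"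
    by (rule sum.reindex_bij_witness[of _ "\<lambda>(Ob',z). Ob'(n := z)" "\<lambda>Ob. (Ob(n := undefined), Ob n)"])
       (auto simp: PiE_def extensional_def Pi_def)
  also have "\<dots> = (\<Sum>Ob'\<in>PiE {..<n} (\<lambda>_. X). \<Sum>z\<in>X. g (Ob'(n := z)))"
    by (subst sum.cartesian_product) auto
  finally show ?thesis .
qed

lemma transfer:
  fixes M :: "'s \<Rightarrow> 's \<Rightarrow> real"
  assumes fX: "finite X" and x0: "x0 \<in> X"
  shows "(\<Sum>Ob\<in>PiE {..<Suc m} (\<lambda>_. X). (\<Prod>j<Suc m. M (if j = 0 then x0 else Ob (j - 1)) (Ob j)) * h (Ob m))
       = (\<Sum>y\<in>X. mpow M X (Suc m) x0 y * h y)"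
proof (induction m arbitrary: h)
  case 0
  have "(\<Sum>Ob\<in>PiE {..<Suc 0} (\<lambda>_. X). (\<Prod>j<Suc 0. M (if j = 0 then x0 else Ob (j - 1)) (Ob j)) * h (Ob 0))
      = (\<Sum>z\<in>X. M x0 z * h z)"
    using PiE_Suc_sum[OF fX, of "\<lambda>Ob. (\<Prod>j<Suc 0. M (if j = 0 then x0 else Ob (j - 1)) (Ob j)) * h (Ob 0)" 0]
    by simp
  also have "\<dots> = (\<Sum>y\<in>X. mpow M X (Suc 0) x0 y * h y)"
  proof -
    have "mpow M X (Suc 0) x0 y = M x0 y" for y
    proof -
      have "mpow M X (Suc 0) x0 y = (\<Sum>z\<in>X. if x0 = z then M z y else 0)"
        by (simp, intro sum.cong) auto
      then show ?thesis using x0 fX by (simp add: sum.delta)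
    qed
    then show ?thesis by simp
  qed
  finally show ?case .
next
  case (Suc m)
  have "(\<Sum>Ob\<in>PiE {..<Suc (Suc m)} (\<lambda>_. X). (\<Prod>j<Suc (Suc m). M (if j = 0 then x0 else Ob (j - 1)) (Ob j)) * h (Ob (Suc m)))
     = (\<Sum>Ob'\<in>PiE {..<Suc m} (\<lambda>_. X). \<Sum>z\<in>X. (\<Prod>j<Suc (Suc m). M (if j = 0 then x0 else (Ob'(Suc m := z)) (j - 1)) ((Ob'(Suc m := z)) j)) * h z)"
    using PiE_Suc_sum[OF fX] by simp
  also have "\<dots> = (\<Sum>Ob'\<in>PiE {..<Suc m} (\<lambda>_. X). (\<Prod>j<Suc m. M (if j = 0 then x0 else Ob' (j - 1)) (Ob' j)) * (\<Sum>z\<in>X. M (Ob' m) z * h z))"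
  proof (intro sum.cong refl)
    fix Ob' assume "Ob' \<in> PiE {..<Suc m} (\<lambda>_. X)"
    have p: "(\<Prod>j<Suc m. M (if j = 0 then x0 else (Ob'(Suc m := z)) (j - 1)) ((Ob'(Suc m := z)) j))
        = (\<Prod>j<Suc m. M (if j = 0 then x0 else Ob' (j - 1)) (Ob' j))" for z
      by (intro prod.cong refl) auto
    show "(\<Sum>z\<in>X. (\<Prod>j<Suc (Suc m). M (if j = 0 then x0 else (Ob'(Suc m := z)) (j - 1)) ((Ob'(Suc m := z)) j)) * h z)
        = (\<Prod>j<Suc m. M (if j = 0 then x0 else Ob' (j - 1)) (Ob' j)) * (\<Sum>z\<in>X. M (Ob' m) z * h z)"
    proof -
      have q: "(\<Prod>j<Suc (Suc m). M (if j = 0 then x0 else (Ob'(Suc m := z)) (j - 1)) ((Ob'(Suc m := z)) j))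
          = (\<Prod>j<Suc m. M (if j = 0 then x0 else Ob' (j - 1)) (Ob' j)) * M (Ob' m) z" for z
      proof -
        define G where "G j = M (if j = 0 then x0 else (Ob'(Suc m := z)) (j - 1)) ((Ob'(Suc m := z)) j)" for j
        have "(\<Prod>j<Suc (Suc m). G j) = (\<Prod>j<Suc m. G j) * G (Suc m)" by (rule prod.lessThan_Suc)
        moreover have "G (Suc m) = M (Ob' m) z" unfolding G_def by simp
        moreover have "(\<Prod>j<Suc m. G j) = (\<Prod>j<Suc m. M (if j = 0 then x0 else Ob' (j - 1)) (Ob' j))"
          unfolding G_def by (rule p)
        ultimately show ?thesis unfolding G_def by simp
      qed
      show ?thesis unfolding q by (simp only: sum_distrib_left mult.assoc)
    qed
  qed
  also have "\<dots> = (\<Sum>y\<in>X. mpow M X (Suc m) x0 y * (\<Sum>z\<in>X. M y z * h z))"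
    by (rule Suc.IH)
  also have "\<dots> = (\<Sum>z\<in>X. mpow M X (Suc (Suc m)) x0 z * h z)"
  proof -
    have "(\<Sum>z\<in>X. mpow M X (Suc (Suc m)) x0 z * h z) = (\<Sum>z\<in>X. (\<Sum>y\<in>X. mpow M X (Suc m) x0 y * M y z) * h z)"
      by (simp only: mpow.simps(2)[of M X "Suc m"])
    also have "\<dots> = (\<Sum>z\<in>X. \<Sum>y\<in>X. mpow M X (Suc m) x0 y * (M y z * h z))"
      by (simp only: sum_distrib_right mult.assoc)
    also have "\<dots> = (\<Sum>y\<in>X. \<Sum>z\<in>X. mpow M X (Suc m) x0 y * (M y z * h z))"
      by (rule sum.swap)
    also have "\<dots> = (\<Sum>y\<in>X. mpow M X (Suc m) x0 y * (\<Sum>z\<in>X. M y z * h z))"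
      by (simp only: sum_distrib_left)
    finally show ?thesis by simp
  qed
  finally show ?case .
qed

lemma cyc:
  fixes M :: "'s \<Rightarrow> 's \<Rightarrow> real"
  assumes fX: "finite X" and rho: "\<forall>y\<in>X. \<rho> y \<in> X"
  shows "(\<Sum>Ob\<in>PiE {..<Suc m} (\<lambda>_. X). \<Prod>j<Suc m. M (if j = 0 then \<rho> (Ob m) else Ob (j - 1)) (Ob j))
       = (\<Sum>y\<in>X. mpow M X (Suc m) (\<rho> y) y)"
proof -
  have "(\<Sum>Ob\<in>PiE {..<Suc m} (\<lambda>_. X). \<Prod>j<Suc m. M (if j = 0 then \<rho> (Ob m) else Ob (j - 1)) (Ob j))
      = (\<Sum>Ob\<in>PiE {..<Suc m} (\<lambda>_. X). \<Sum>y\<in>X. (\<Prod>j<Suc m. M (if j = 0 then \<rho> y else Ob (j - 1)) (Ob j)) * (if Ob m = y then 1 else 0))"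
  proof (intro sum.cong refl)
    fix Ob assume Ob: "Ob \<in> PiE {..<Suc m} (\<lambda>_. X)"
    then have "Ob m \<in> X" by auto
    then show "(\<Prod>j<Suc m. M (if j = 0 then \<rho> (Ob m) else Ob (j - 1)) (Ob j))
        = (\<Sum>y\<in>X. (\<Prod>j<Suc m. M (if j = 0 then \<rho> y else Ob (j - 1)) (Ob j)) * (if Ob m = y then 1 else 0))"
      using fX by (simp add: if_distrib sum.If_cases cong: if_cong)
  qed
  also have "\<dots> = (\<Sum>y\<in>X. \<Sum>Ob\<in>PiE {..<Suc m} (\<lambda>_. X). (\<Prod>j<Suc m. M (if j = 0 then \<rho> y else Ob (j - 1)) (Ob j)) * (if Ob m = y then 1 else 0))"
    by (rule sum.swap)
  also have "\<dots> = (\<Sum>y\<in>X. \<Sum>y'\<in>X. mpow M X (Suc m) (\<rho> y) y' * (if y' = y then 1 else 0))"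
    by (intro sum.cong refl transfer[OF fX]) (use rho in auto)
  also have "\<dots> = (\<Sum>y\<in>X. mpow M X (Suc m) (\<rho> y) y)"
    using fX by (simp add: if_distrib sum.If_cases cong: if_cong)
  finally show ?thesis .
qed

lemma rot_V3: "\<forall>y\<in>V3. rot y \<in> V3" by (auto simp: V3_def rot_def)
lemma fin_V3: "finite V3" by (simp add: V3_def)

lemma mpow1: "x \<in> V3 \<Longrightarrow> mpow M V3 (Suc 0) x y = M x y"
proof -
  assume x: "x \<in> V3"
  have "mpow M V3 (Suc 0) x y = (\<Sum>z\<in>V3. if x = z then M z y else 0)"
    by (simp, intro sum.cong) auto
  then show ?thesis using x fin_V3 by (simp add: sum.delta)
qed

lemma mpow2: "x \<in> V3 \<Longrightarrow> y \<in> V3 \<Longrightarrow> mpow Tcc V3 2 x y = T2f x y"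
proof -
  assume x: "x \<in> V3" and y: "y \<in> V3"
  have "mpow Tcc V3 2 x y = (\<Sum>z\<in>V3. mpow Tcc V3 (Suc 0) x z * Tcc z y)"
    by (simp add: numeral_2_eq_2 del: mpow.simps(1))
  also have "\<dots> = (\<Sum>z\<in>V3. Tcc x z * Tcc z y)" using mpow1[OF x] by simp
  finally show ?thesis using T2 x y by simp
qed

lemma mpow_rec: "x \<in> V3 \<Longrightarrow> y \<in> V3 \<Longrightarrow> mpow Tcc V3 (n + 3) x y = -3 * mpow Tcc V3 (n + 1) x y"
proof (induction n arbitrary: y)
  case 0
  have "mpow Tcc V3 3 x y = (\<Sum>z\<in>V3. mpow Tcc V3 2 x z * Tcc z y)"
    by (simp add: numeral_3_eq_3 numeral_2_eq_2 del: mpow.simps(1))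
  also have "\<dots> = (\<Sum>z\<in>V3. T2f x z * Tcc z y)" using mpow2[OF 0(1)] by simp
  also have "\<dots> = -3 * Tcc x y" using T3 0 by simp
  also have "\<dots> = -3 * mpow Tcc V3 (0 + 1) x y" using mpow1[OF 0(1)] by simp
  finally show ?case by simp
next
  case (Suc n)
  have "mpow Tcc V3 (Suc n + 3) x y = (\<Sum>z\<in>V3. mpow Tcc V3 (n + 3) x z * Tcc z y)"
    by (simp only: add_Suc mpow.simps(2))
  also have "\<dots> = (\<Sum>z\<in>V3. -3 * mpow Tcc V3 (n + 1) x z * Tcc z y)"
    by (intro sum.cong refl) (simp add: Suc.IH[OF Suc.prems(1)])
  also have "\<dots> = -3 * mpow Tcc V3 (Suc n + 1) x y"
  proof -
    have "mpow Tcc V3 (Suc n + 1) x y = (\<Sum>z\<in>V3. mpow Tcc V3 (n + 1) x z * Tcc z y)"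
      by (simp only: add_Suc mpow.simps(2))
    then show ?thesis by (simp only: sum_distrib_left mult.assoc)
  qed
  finally show ?case .
qed

definition fk :: "nat \<Rightarrow> real" where "fk n = (\<Sum>y\<in>V3. mpow Tcc V3 n (rot y) y)"

lemma fk_rec: "fk (n + 3) = -3 * fk (n + 1)"
  unfolding fk_def by (simp add: sum_distrib_left mpow_rec rot_V3 cong: sum.cong)

lemma fk_1: "fk 1 = -6"
proof -
  have "fk 1 = (\<Sum>y\<in>V3. Tcc (rot y) y)" unfolding fk_def using mpow1 rot_V3 by simp
  then show ?thesis using f1 by simp
qed

lemma fk_2: "fk 2 = 24"
proof -
  have "fk 2 = (\<Sum>y\<in>V3. T2f (rot y) y)" unfolding fk_def using mpow2 rot_V3 by simp
  then show ?thesis using f2 by simp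
qed

lemma fk_ne0: "fk (Suc m) \<noteq> 0"
proof -
  have "fk (Suc m) \<noteq> 0 \<and> fk (Suc (Suc m)) \<noteq> 0"
  proof (induction m)
    case 0 then show ?case using fk_1 fk_2 by (simp add: numeral_2_eq_2)
  next
    case (Suc m)
    have "fk (Suc (Suc (Suc m))) = -3 * fk (Suc m)" using fk_rec[of m] by (simp add: numeral_3_eq_3)
    then show ?case using Suc by simp
  qed
  then show ?thesis by simp
qed

definition Phi :: "real\<times>real\<times>real \<Rightarrow> real\<times>real\<times>real \<Rightarrow> (real\<times>real\<times>real)\<times>(real\<times>real\<times>real) \<Rightarrow> real" where
  "Phi a b y = Fd (fst a) (fst b) (fst (fst y)) * Fd (snd (snd (snd y))) (fst (snd y)) (fst (fst y))
     * Fd (fst (snd a)) (fst (snd b)) (fst (snd (fst y))) * Fd (fst (snd y)) (fst (snd (snd y))) (fst (snd (fst y)))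
     * Fd (snd (snd a)) (snd (snd b)) (snd (snd (fst y))) * Fd (fst (snd (snd y))) (snd (snd (snd y))) (snd (snd (fst y)))
     / (wv (fst b) * wv (fst (snd b)) * wv (snd (snd b)) * wv (fst (fst y)) * wv (fst (snd (fst y))) * wv (snd (snd (fst y)))
        * wv (fst (snd y)) * wv (fst (snd (snd y))) * wv (snd (snd (snd y))))"

lemma Phi_split: "Phi a b (s,t) = (Bm (fst s) (fst a) (fst b) * Bm (fst (snd s)) (fst (snd a)) (fst (snd b))
   * Bm (snd (snd s)) (snd (snd a)) (snd (snd b))) *
   (Fd (snd (snd t)) (fst t) (fst s) * Fd (fst t) (fst (snd t)) (fst (snd s))
      * Fd (fst (snd t)) (snd (snd t)) (snd (snd s)) / (wv (fst t) * wv (fst (snd t)) * wv (snd (snd t))))"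
  unfolding Phi_def Bm_def by (simp add: times_divide_times_eq mult_ac)

lemma Phi_sum: "a \<in> V3 \<Longrightarrow> b \<in> V3 \<Longrightarrow> (\<Sum>y\<in>V3 \<times> V3. Phi a b y) = Tcc a b"
proof -
  assume a: "a \<in> V3" and b: "b \<in> V3"
  have "(\<Sum>y\<in>V3 \<times> V3. Phi a b y) = (\<Sum>s\<in>V3. \<Sum>t\<in>V3. Phi a b (s,t))"
    by (simp add: sum.cartesian_product)
  also have "\<dots> = (\<Sum>s\<in>V3. (Bm (fst s) (fst a) (fst b) * Bm (fst (snd s)) (fst (snd a)) (fst (snd b))
   * Bm (snd (snd s)) (snd (snd a)) (snd (snd b))) * Hs s)"
    unfolding Phi_split Hs_def by (simp add: sum_distrib_left)
  also have "\<dots> = (\<Sum>s\<in>V3. Bm (fst s) (fst a) (fst b) * Bm (fst (snd s)) (fst (snd a)) (fst (snd b))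
   * Bm (snd (snd s)) (snd (snd a)) (snd (snd b)) * (2 * eps (fst s) (fst (snd s)) (snd (snd s))))"
    using Hs_val by (intro sum.cong refl) simp
  also have "\<dots> = Tcc a b" using Tcc_sum a b by simp
  finally show ?thesis .
qed



definition comp9 :: "nat \<Rightarrow> real\<times>real\<times>real \<Rightarrow> (real\<times>real\<times>real)\<times>(real\<times>real\<times>real) \<Rightarrow> real" where
  "comp9 q a y = (if q = 0 then fst a else if q = 1 then fst (snd a) else if q = 2 then snd (snd a)
     else if q = 3 then fst (fst y) else if q = 4 then fst (snd (fst y)) else if q = 5 then snd (snd (fst y))
     else if q = 6 then fst (snd y) else if q = 7 then fst (snd (snd y)) else snd (snd (snd y)))"

definition dec :: "nat \<Rightarrow> (nat \<Rightarrow> real\<times>real\<times>real) \<times> (nat \<Rightarrow> (real\<times>real\<times>real)\<times>(real\<times>real\<times>real)) \<Rightarrow> nat \<times> nat \<Rightarrow> real" where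
  "dec k p = (\<lambda>(j,q). if j < k \<and> q < 9 then comp9 q (fst p j) (snd p j) else undefined)"

definition enc :: "nat \<Rightarrow> (nat \<times> nat \<Rightarrow> real) \<Rightarrow> (nat \<Rightarrow> real\<times>real\<times>real) \<times> (nat \<Rightarrow> (real\<times>real\<times>real)\<times>(real\<times>real\<times>real))" where
  "enc k c = ((\<lambda>j. if j < k then (c (j,0), c (j,1), c (j,2)) else undefined),
              (\<lambda>j. if j < k then ((c (j,3), c (j,4), c (j,5)), (c (j,6), c (j,7), c (j,8))) else undefined))"

definition Tset :: "nat \<Rightarrow> ((nat \<Rightarrow> real\<times>real\<times>real) \<times> (nat \<Rightarrow> (real\<times>real\<times>real)\<times>(real\<times>real\<times>real))) set" where
  "Tset k = PiE {..<k} (\<lambda>_. V3) \<times> PiE {..<k} (\<lambda>_. V3 \<times> V3)"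

lemma q9_cases: "(q::nat) < 9 \<Longrightarrow> q = 0 \<or> q = 1 \<or> q = 2 \<or> q = 3 \<or> q = 4 \<or> q = 5 \<or> q = 6 \<or> q = 7 \<or> q = 8"
  by linarith

lemma dec_enc: assumes c: "c \<in> PiE (GI k) (\<lambda>_. {0,1,2::real})" shows "dec k (enc k c) = c"
  proof
    fix x show "dec k (enc k c) x = c x"
    proof (cases x)
      case (Pair j q)
      show ?thesis
      proof (cases "j < k \<and> q < 9")
        case True
        then have "q = 0 \<or> q = 1 \<or> q = 2 \<or> q = 3 \<or> q = 4 \<or> q = 5 \<or> q = 6 \<or> q = 7 \<or> q = 8" using q9_cases by blast
        then show ?thesis using True Pair by (auto simp: dec_def enc_def comp9_def)
      next
        case False
        then have "x \<notin> GI k" using Pair by (auto simp: GI_def)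
        then have "c x = undefined" using c by (rule PiE_arb[rotated])
        then show ?thesis using False Pair by (auto simp: dec_def)
      qed
    qed
  qed

lemma enc_mem: assumes c: "c \<in> PiE (GI k) (\<lambda>_. {0,1,2::real})" shows "enc k c \<in> Tset k"
proof -
  have cv: "\<And>j q. j < k \<Longrightarrow> q < 9 \<Longrightarrow> c (j,q) \<in> {0,1,2}" using c by (auto simp: GI_def PiE_def Pi_def)
  have "fst (enc k c) \<in> PiE {..<k} (\<lambda>_. V3)"
  proof (rule PiE_I)
    fix j assume j: "j \<in> {..<k}"
    then have e: "fst (enc k c) j = (c (j,0), c (j,1), c (j,2))" by (simp add: enc_def)
    have "c (j,0) \<in> {0,1,2}" "c (j,1) \<in> {0,1,2}" "c (j,2) \<in> {0,1,2}" using cv j by auto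
    then show "fst (enc k c) j \<in> V3" unfolding V3_def e by blast
  next
    fix j assume "j \<notin> {..<k}" then show "fst (enc k c) j = undefined" by (simp add: enc_def)
  qed
  moreover have "snd (enc k c) \<in> PiE {..<k} (\<lambda>_. V3 \<times> V3)"
  proof (rule PiE_I)
    fix j assume j: "j \<in> {..<k}"
    then have e: "snd (enc k c) j = ((c (j,3), c (j,4), c (j,5)), (c (j,6), c (j,7), c (j,8)))" by (simp add: enc_def)
    have "c (j,3) \<in> {0,1,2}" "c (j,4) \<in> {0,1,2}" "c (j,5) \<in> {0,1,2}"
      "c (j,6) \<in> {0,1,2}" "c (j,7) \<in> {0,1,2}" "c (j,8) \<in> {0,1,2}" using cv j by auto
    then show "snd (enc k c) j \<in> V3 \<times> V3" unfolding V3_def e by blast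
  next
    fix j assume "j \<notin> {..<k}" then show "snd (enc k c) j = undefined" by (simp add: enc_def)
  qed
  ultimately show ?thesis unfolding Tset_def by (simp add: mem_Times_iff)
qed

lemma enc_dec_t1: "j < k \<Longrightarrow> fst (enc k (dec k p)) j = fst p j"
  by (simp add: enc_def dec_def comp9_def)

lemma enc_dec_t2: "j < k \<Longrightarrow> snd (enc k (dec k p)) j = snd p j"
  by (simp add: enc_def dec_def comp9_def)
lemma enc_dec_t3: "p \<in> Tset k \<Longrightarrow> \<not> j < k \<Longrightarrow> fst (enc k (dec k p)) j = fst p j"
proof -
  assume p: "p \<in> Tset k" and j: "\<not> j < k"
  have p1: "fst p \<in> PiE {..<k} (\<lambda>_. V3)" using p by (simp add: Tset_def mem_Times_iff)
  have "fst p j = undefined" using PiE_arb[OF p1, of j] j by simp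
  then show ?thesis using j by (simp add: enc_def)
qed
lemma Tset_mem: "p \<in> Tset k \<Longrightarrow> fst p \<in> PiE {..<k} (\<lambda>_. V3) \<and> snd p \<in> PiE {..<k} (\<lambda>_. V3 \<times> V3)"
  by (simp add: Tset_def mem_Times_iff)

lemma enc_dec: assumes p: "p \<in> Tset k" shows "enc k (dec k p) = p"
proof -
  have p1: "fst p \<in> PiE {..<k} (\<lambda>_. V3)" and p2: "snd p \<in> PiE {..<k} (\<lambda>_. V3 \<times> V3)"
    using Tset_mem[OF p] by auto
  have "fst (enc k (dec k p)) = fst p"
  proof
    fix j show "fst (enc k (dec k p)) j = fst p j"
    proof (cases "j < k")
      case True then show ?thesis by (rule enc_dec_t1)
    next
      case False then have "fst p j = undefined" using PiE_arb[OF p1, of j] by simp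
      then show ?thesis using False by (simp add: enc_def)
    qed
  qed
  moreover have "snd (enc k (dec k p)) = snd p"
  proof
    fix j show "snd (enc k (dec k p)) j = snd p j"
    proof (cases "j < k")
      case True then show ?thesis by (rule enc_dec_t2)
    next
      case False then have "snd p j = undefined" using PiE_arb[OF p2, of j] by simp
      then show ?thesis using False by (simp add: enc_def)
    qed
  qed
  ultimately show ?thesis by (simp add: prod_eq_iff)
qed

lemma dec_mem: assumes p: "p \<in> Tset k" shows "dec k p \<in> PiE (GI k) (\<lambda>_. {0,1,2})"
proof -
  have p1: "fst p \<in> PiE {..<k} (\<lambda>_. V3)" and p2: "snd p \<in> PiE {..<k} (\<lambda>_. V3 \<times> V3)"
    using Tset_mem[OF p] by auto
  show ?thesis
  proof (rule PiE_I)
    fix x assume x: "x \<in> GI k"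
    then obtain j q where jq: "x = (j,q)" "j < k" "q < 9" by (auto simp: GI_def)
    have a: "fst p j \<in> V3" "snd p j \<in> V3 \<times> V3" using p1 p2 jq by auto
    obtain a0 a1 a2 where A: "fst p j = (a0,a1,a2)" by (cases "fst p j") auto
    obtain s0 s1 s2 t0 t1 t2 where B: "snd p j = ((s0,s1,s2),(t0,t1,t2))" by (cases "snd p j") auto
    have m: "a0 \<in> {0,1,2}" "a1 \<in> {0,1,2}" "a2 \<in> {0,1,2}" "s0 \<in> {0,1,2}" "s1 \<in> {0,1,2}" "s2 \<in> {0,1,2}"
      "t0 \<in> {0,1,2}" "t1 \<in> {0,1,2}" "t2 \<in> {0,1,2}" using a unfolding A B V3_def mem_Times_iff by simp_all
    have "comp9 q (fst p j) (snd p j) \<in> {0,1,2}"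
      using q9_cases[OF jq(3)] unfolding A B comp9_def using m by (elim disjE) simp_all
    then show "dec k p x \<in> {0,1,2}" using jq by (simp add: dec_def)
  next
    fix x assume "x \<notin> GI k" then show "dec k p x = undefined"
      by (cases x) (auto simp: dec_def GI_def)
  qed
qed

lemma reindex:
  fixes g :: "(nat \<times> nat \<Rightarrow> real) \<Rightarrow> real"
  shows "(\<Sum>c\<in>PiE (GI k) (\<lambda>_. {0,1,2}). g c) = (\<Sum>p\<in>Tset k. g (dec k p))"
  by (rule sum.reindex_bij_witness[of _ "dec k" "enc k"]) (auto simp: dec_enc enc_mem enc_dec dec_mem)
definition Oprev :: "nat \<Rightarrow> (nat \<Rightarrow> real\<times>real\<times>real) \<Rightarrow> nat \<Rightarrow> real\<times>real\<times>real" where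
  "Oprev k Ob j = (if j = 0 then rot (Ob (k - 1)) else Ob (j - 1))"

definition colt :: "nat \<Rightarrow> (nat \<times> nat \<Rightarrow> real) \<Rightarrow> nat \<Rightarrow> real" where
  "colt k c j = (\<Prod>r<18. c (srcA k (j,r)) - c (tgtA k (j,r))) / (\<Prod>q<9. wv (c (j,q)))"

lemma ATsum_colt: "ATsum (GI k) (GJ k) (srcA k) (tgtA k) (\<lambda>_. {0,1,2}) = (\<Sum>c\<in>PiE (GI k) (\<lambda>_. {0,1,2}). \<Prod>j<k. colt k c j)"
  unfolding ATsum_def
proof (intro sum.cong refl)
  fix c :: "nat \<times> nat \<Rightarrow> real"
  have n: "(\<Prod>jr\<in>GJ k. c (srcA k jr) - c (tgtA k jr)) = (\<Prod>j<k. \<Prod>r<18. c (srcA k (j,r)) - c (tgtA k (j,r)))"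
    unfolding GJ_def by (simp add: prod.cartesian_product)
  have d: "(\<Prod>i\<in>GI k. dw {0,1,2} (c i)) = (\<Prod>j<k. \<Prod>q<9. wv (c (j,q)))"
    unfolding GI_def wv_def by (simp add: prod.cartesian_product)
  show "(\<Prod>jr\<in>GJ k. c (srcA k jr) - c (tgtA k jr)) / (\<Prod>i\<in>GI k. dw {0,1,2} (c i)) = (\<Prod>j<k. colt k c j)"
    unfolding n d colt_def by (simp add: prod_dividef)
qed

lemma dec_at: "j < k \<Longrightarrow> q < 9 \<Longrightarrow> dec k p (j,q) = comp9 q (fst p j) (snd p j)"
  by (simp add: dec_def)

lemma colt_dec:
  assumes k: "k \<ge> 1" and j: "j < k"
  shows "colt k (dec k p) j = Phi (Oprev k (fst p) j) (fst p j) (snd p j)"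
proof (cases "j = 0")
  case True
  have k1: "k - 1 < k" using k by simp
  show ?thesis unfolding colt_def using True j k1
    by (simp add: lessThan_nat_numeral srcA_def tgtA_def arcs_def Let_def prevo_def dec_at comp9_def
        Phi_def Fd_def Oprev_def rot_def mult_ac)
next
  case False
  have j1: "j - 1 < k" using j by simp
  show ?thesis unfolding colt_def using False j j1
    by (simp add: lessThan_nat_numeral srcA_def tgtA_def arcs_def Let_def prevo_def dec_at comp9_def
        Phi_def Fd_def Oprev_def rot_def mult_ac)
qed

lemma ATsum_fk:
  assumes km: "k = Suc m"
  shows "ATsum (GI k) (GJ k) (srcA k) (tgtA k) (\<lambda>_. {0,1,2}) = fk k"
proof -
  have k: "k \<ge> 1" using km by simp
  have "ATsum (GI k) (GJ k) (srcA k) (tgtA k) (\<lambda>_. {0,1,2}) = (\<Sum>p\<in>Tset k. \<Prod>j<k. colt k (dec k p) j)"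
    unfolding ATsum_colt by (rule reindex)
  also have "\<dots> = (\<Sum>p\<in>Tset k. \<Prod>j<k. Phi (Oprev k (fst p) j) (fst p j) (snd p j))"
    by (intro sum.cong prod.cong refl) (simp add: colt_dec[OF k])
  also have "\<dots> = (\<Sum>Ob\<in>PiE {..<k} (\<lambda>_. V3). \<Sum>Y\<in>PiE {..<k} (\<lambda>_. V3 \<times> V3). \<Prod>j<k. Phi (Oprev k Ob j) (Ob j) (Y j))"
    unfolding Tset_def by (simp only: sum.cartesian_product' fst_conv snd_conv)
  also have "\<dots> = (\<Sum>Ob\<in>PiE {..<k} (\<lambda>_. V3). \<Prod>j<k. \<Sum>y\<in>V3 \<times> V3. Phi (Oprev k Ob j) (Ob j) y)"
    by (intro sum.cong refl prod_sum_PiE[symmetric]) (simp_all add: fin_V3)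
  also have "\<dots> = (\<Sum>Ob\<in>PiE {..<k} (\<lambda>_. V3). \<Prod>j<k. Tcc (Oprev k Ob j) (Ob j))"
  proof (intro sum.cong prod.cong refl)
    fix Ob j assume Ob: "Ob \<in> PiE {..<k} (\<lambda>_. V3)" and j: "j \<in> {..<k}"
    have a: "Ob j \<in> V3" using PiE_mem[OF Ob j] by simp
    have b: "Oprev k Ob j \<in> V3"
    proof (cases "j = 0")
      case True
      have "k - 1 \<in> {..<k}" using k by simp
      then have "Ob (k - 1) \<in> V3" using PiE_mem[OF Ob] by simp
      then show ?thesis using True rot_V3 by (simp add: Oprev_def)
    next
      case False
      have "j - 1 \<in> {..<k}" using j by auto
      then have "Ob (j - 1) \<in> V3" using PiE_mem[OF Ob] by simp
      then show ?thesis using False by (simp add: Oprev_def)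
    qed
    show "(\<Sum>y\<in>V3 \<times> V3. Phi (Oprev k Ob j) (Ob j) y) = Tcc (Oprev k Ob j) (Ob j)"
      by (rule Phi_sum[OF b a])
  qed
  also have "\<dots> = (\<Sum>Ob\<in>PiE {..<Suc m} (\<lambda>_. V3). \<Prod>j<Suc m. Tcc (if j = 0 then rot (Ob m) else Ob (j - 1)) (Ob j))"
    unfolding km Oprev_def by (simp only: diff_Suc_1)
  also have "\<dots> = (\<Sum>y\<in>V3. mpow Tcc V3 (Suc m) (rot y) y)"
    by (rule cyc[OF fin_V3 rot_V3])
  also have "\<dots> = fk k" unfolding fk_def km ..
  finally show ?thesis .
qed

lemma ATsum_GP_ne0: "k \<ge> 1 \<Longrightarrow> ATsum (GI k) (GJ k) (srcA k) (tgtA k) (\<lambda>_. {0,1,2}) \<noteq> 0"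
proof -
  assume "k \<ge> 1"
  then obtain m where km: "k = Suc m" by (cases k) auto
  show ?thesis using ATsum_fk[OF km] fk_ne0[of m] km by simp
qed



lemma list_colour:
  fixes L :: "(bool \<times> nat) set \<Rightarrow> nat set"
  assumes k: "k \<ge> 1" and L: "\<forall>e\<in>gp_edges (3*k) k. finite (L e) \<and> card (L e) = 3"
  shows "\<exists>c. proper_edge_colouring (gp_edges (3*k) k) c \<and> (\<forall>e\<in>gp_edges (3*k) k. c e \<in> L e)"
proof -
  let ?E = "gp_edges (3*k) k"
  define L' where "L' i = real ` L (gp_edge k i)" for i
  have inE: "\<And>i. i \<in> GI k \<Longrightarrow> gp_edge k i \<in> ?E" using edges_eq[OF k] by blast
  have L': "\<forall>i\<in>GI k. finite (L' i) \<and> card (L' i) = 3"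
  proof
    fix i assume "i \<in> GI k"
    then have "finite (L (gp_edge k i)) \<and> card (L (gp_edge k i)) = 3" using L inE by blast
    then show "finite (L' i) \<and> card (L' i) = 3" unfolding L'_def
      by (simp add: card_image inj_on_def)
  qed
  have fI: "finite (GI k)" and fJ: "finite (GJ k)" by (auto simp: GI_def GJ_def)
  have cJ: "card (GJ k) = 2 * card (GI k)" by (simp add: card_GI card_GJ)
  have st: "\<forall>j\<in>GJ k. srcA k j \<in> GI k \<and> tgtA k j \<in> GI k" using arcs_in[OF k] by blast
  have L0: "\<forall>i\<in>GI k. finite ({0,1,2}::real set) \<and> card ({0,1,2}::real set) = 3" by simp
  have "ATsum (GI k) (GJ k) (srcA k) (tgtA k) L' = ATsum (GI k) (GJ k) (srcA k) (tgtA k) (\<lambda>_. {0,1,2})"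
    using AT_indep[OF fI fJ cJ st L'] AT_indep[OF fI fJ cJ st L0] by simp
  then have ne: "ATsum (GI k) (GJ k) (srcA k) (tgtA k) L' \<noteq> 0" using ATsum_GP_ne0[OF k] by simp
  then obtain c where c: "c \<in> PiE (GI k) L'"
    and cne: "(\<Prod>j\<in>GJ k. c (srcA k j) - c (tgtA k j)) / (\<Prod>i\<in>GI k. dw (L' i) (c i)) \<noteq> 0"
    unfolding ATsum_def by (meson sum.neutral)
  have diff: "\<forall>r\<in>GJ k. c (srcA k r) \<noteq> c (tgtA k r)"
  proof
    fix r assume r: "r \<in> GJ k"
    have "(\<Prod>j\<in>GJ k. c (srcA k j) - c (tgtA k j)) \<noteq> 0" using cne by auto
    then show "c (srcA k r) \<noteq> c (tgtA k r)" using r fJ by (auto simp: prod_zero_iff)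
  qed
  define ix where "ix e = (SOME i. i \<in> GI k \<and> gp_edge k i = e)" for e
  have ix: "\<And>e. e \<in> ?E \<Longrightarrow> ix e \<in> GI k \<and> gp_edge k (ix e) = e"
  proof -
    fix e assume "e \<in> ?E"
    then have "e \<in> gp_edge k ` GI k" using edges_eq[OF k] by simp
    then have "\<exists>i. i \<in> GI k \<and> gp_edge k i = e" by blast
    then show "ix e \<in> GI k \<and> gp_edge k (ix e) = e" unfolding ix_def by (rule someI_ex)
  qed
  define col where "col e = nat \<lfloor>c (ix e)\<rfloor>" for e
  have col: "\<And>e. e \<in> ?E \<Longrightarrow> col e \<in> L e \<and> real (col e) = c (ix e)"
  proof -
    fix e assume e: "e \<in> ?E"
    have "c (ix e) \<in> L' (ix e)" using c ix[OF e] by auto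
    then obtain n where "n \<in> L e" "c (ix e) = real n" using ix[OF e] unfolding L'_def by auto
    then show "col e \<in> L e \<and> real (col e) = c (ix e)" unfolding col_def by simp
  qed
  have "proper_edge_colouring ?E col"
    unfolding proper_edge_colouring_def
  proof (intro ballI impI)
    fix e e' assume e: "e \<in> ?E" and e': "e' \<in> ?E" and h: "e \<noteq> e' \<and> e \<inter> e' \<noteq> {}"
    then obtain x where x: "x \<in> e" "x \<in> e'" by auto
    have ne: "ix e \<noteq> ix e'" using ix[OF e] ix[OF e'] h by metis
    obtain r where r: "r \<in> GJ k" "(srcA k r = ix e \<and> tgtA k r = ix e') \<or> (srcA k r = ix e' \<and> tgtA k r = ix e)"
      using adjacent[OF k _ _ ne, of x] ix[OF e] ix[OF e'] x by auto
    have "c (ix e) \<noteq> c (ix e')" using diff r by auto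
    then show "col e \<noteq> col e'" using col[OF e] col[OF e'] by metis
  qed
  then show ?thesis using col by blast
qed

lemma three_edges:
  assumes k: "k \<ge> 1"
  defines "e1 \<equiv> {(False, 0), (False, 1)} :: (bool \<times> nat) set"
      and "e2 \<equiv> {(False, 0), (True, 0)} :: (bool \<times> nat) set"
      and "e3 \<equiv> {(False, 3 * k - 1), (False, 0)} :: (bool \<times> nat) set"
  shows "e1 \<in> gp_edges (3*k) k \<and> e2 \<in> gp_edges (3*k) k \<and> e3 \<in> gp_edges (3*k) k
    \<and> e1 \<noteq> e2 \<and> e1 \<noteq> e3 \<and> e2 \<noteq> e3 \<and> e1 \<inter> e2 \<noteq> {} \<and> e1 \<inter> e3 \<noteq> {} \<and> e2 \<inter> e3 \<noteq> {}"
proof -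
  have n: "3 * k \<ge> 3" using k by simp
  have m1: "(0 + 1) mod (3 * k) = 1" using n by simp
  have m2: "(3 * k - 1 + 1) mod (3 * k) = 0" using n by simp
  have lt0: "0 < 3 * k" and lt1: "3 * k - 1 < 3 * k" using n by auto
  have A: "\<And>i. i < 3 * k \<Longrightarrow> {(False, i), (False, (i + 1) mod (3 * k))} \<in> gp_edges (3*k) k"
    unfolding gp_edges_def by blast
  have B: "\<And>i. i < 3 * k \<Longrightarrow> {(False, i), (True, i)} \<in> gp_edges (3*k) k"
    unfolding gp_edges_def by blast
  have "e1 \<in> gp_edges (3*k) k" using A[OF lt0] unfolding e1_def m1 .
  moreover have "e2 \<in> gp_edges (3*k) k" using B[OF lt0] unfolding e2_def .
  moreover have "e3 \<in> gp_edges (3*k) k" using A[OF lt1] unfolding e3_def m2 .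
  moreover have "e1 \<noteq> e2"
  proof
    assume h: "e1 = e2"
    have "(True, 0) \<in> e2" unfolding e2_def by simp
    then have "(True, 0) \<in> e1" using h by simp
    then show False unfolding e1_def by simp
  qed
  moreover have "e1 \<noteq> e3"
  proof
    assume h: "e1 = e3"
    have "(False, 1) \<in> e1" unfolding e1_def by simp
    then have "(False, 1) \<in> e3" using h by simp
    moreover have "3 * k - 1 \<noteq> 1" using n by simp
    ultimately show False unfolding e3_def by simp
  qed
  moreover have "e2 \<noteq> e3"
  proof
    assume h: "e2 = e3"
    have "(True, 0) \<in> e2" unfolding e2_def by simp
    then have "(True, 0) \<in> e3" using h by simp
    then show False unfolding e3_def by simp
  qed
  moreover have "(False, 0) \<in> e1" "(False, 0) \<in> e2" "(False, 0) \<in> e3" unfolding e1_def e2_def e3_def by simp_all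
  ultimately show ?thesis by blast
qed

lemma no_small:
  assumes k: "k \<ge> 1" and c: "proper_edge_colouring (gp_edges (3*k) k) (c :: (bool \<times> nat) set \<Rightarrow> nat)"
    and m: "\<forall>e\<in>gp_edges (3*k) k. c e < m"
  shows "m \<ge> 3"
proof -
  note t = three_edges[OF k]
  let ?e1 = "{(False, 0), (False, 1)} :: (bool \<times> nat) set"
  let ?e2 = "{(False, 0), (True, 0)} :: (bool \<times> nat) set"
  let ?e3 = "{(False, 3 * k - 1), (False, 0)} :: (bool \<times> nat) set"
  have d: "c ?e1 \<noteq> c ?e2" "c ?e1 \<noteq> c ?e3" "c ?e2 \<noteq> c ?e3"
    using c t unfolding proper_edge_colouring_def by meson+
  have "c ?e1 < m" "c ?e2 < m" "c ?e3 < m" using m t by auto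
  with d show ?thesis by linarith
qed

theorem theorem2:
  fixes k :: nat
  assumes "k \<ge> 1"
  shows "choice_index (gp_edges (3 * k) k) = chromatic_index (gp_edges (3 * k) k)"
proof -
  let ?E = "gp_edges (3 * k) k"
  have ch: "choice_index ?E = 3"
    unfolding choice_index_def
  proof (rule Least_equality)
    show "\<forall>L :: (bool \<times> nat) set \<Rightarrow> nat set. (\<forall>e\<in>?E. finite (L e) \<and> card (L e) = 3) \<longrightarrow>
        (\<exists>c. proper_edge_colouring ?E c \<and> (\<forall>e\<in>?E. c e \<in> L e))"
      by (intro allI impI) (rule list_colour[OF assms])
  next
    fix l assume h: "\<forall>L :: (bool \<times> nat) set \<Rightarrow> nat set. (\<forall>e\<in>?E. finite (L e) \<and> card (L e) = l) \<longrightarrow>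
        (\<exists>c. proper_edge_colouring ?E c \<and> (\<forall>e\<in>?E. c e \<in> L e))"
    have "\<exists>c. proper_edge_colouring ?E c \<and> (\<forall>e\<in>?E. c e \<in> {..<l})"
      using spec[OF h, of "\<lambda>_. {..<l}"] by simp
    then obtain c where c: "proper_edge_colouring ?E c" "\<forall>e\<in>?E. c e \<in> {..<l}" by blast
    have "\<forall>e\<in>?E. c e < l" using c(2) by simp
    then show "3 \<le> l" using no_small[OF assms c(1)] by simp
  qed
  have cr: "chromatic_index ?E = 3"
    unfolding chromatic_index_def
  proof (rule Least_equality)
    obtain c where c: "proper_edge_colouring ?E c" "\<forall>e\<in>?E. c e \<in> {0,1,2::nat}"
      using list_colour[OF assms, of "\<lambda>_. {0,1,2}"] by auto
    then show "\<exists>c :: (bool \<times> nat) set \<Rightarrow> nat. proper_edge_colouring ?E c \<and> (\<forall>e\<in>?E. c e < 3)"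
      by (intro exI[of _ c]) auto
  next
    fix m assume "\<exists>c :: (bool \<times> nat) set \<Rightarrow> nat. proper_edge_colouring ?E c \<and> (\<forall>e\<in>?E. c e < m)"
    then obtain c :: "(bool \<times> nat) set \<Rightarrow> nat" where "proper_edge_colouring ?E c" "\<forall>e\<in>?E. c e < m" by blast
    then show "3 \<le> m" using no_small[OF assms] by simp
  qed
  show ?thesis using ch cr by simp
qed


end
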